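(* Let $(X_1,\dots,X_d)$ be a $d$-dimensional $1$-Meixner random vector with $E[X_i]=0$ for all $i$, and let real numbers $\alpha_{i,j,k}$, $\beta_{i,j}$ satisfy $[U_i,X_j]=\sum_{k=1}^d\alpha_{i,j,k}X_k+\beta_{i,j}I$ for all $i,j$. Put $A:=\max\{|\alpha_{i,j,k}|:1\le i,j,k\le d\}$, $B:=\max\{|\beta_{i,j}|:1\le i,j\le d\}$ and $K:=\max\{dA+B,1\}$. Then for every multi-index $\mathbf i=(i_1,\dots,i_d)\in(\mathbb N\cup\{0\})^d$, $$\big|E[X^{\mathbf i}]\big|\le K^{|\mathbf i|}\,|\mathbf i|!\qquad\text{and}\qquad E\big[|X^{\mathbf i}|\big]\le(2K)^{|\mathbf i|}\,|\mathbf i|!,$$ where $|\mathbf i|=i_1+\cdots+i_d$ and $X^{\mathbf i}=X_1^{i_1}\cdots X_d^{i_d}$.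
   Context: Let $X_1,\dots,X_d$ be real random variables on $(\Omega,\mathcal F,P)$ with finite moments of all orders. $F$ is the space of polynomial random variables $f(X_1,\dots,X_d)$ (complex coefficients), $F_n$ those of degree $\le n$, $G_0=F_0$, $G_n=F_n\ominus F_{n-1}$ in $L^2(P)$. For $f\in G_n$, $X_if\in G_{n-1}\oplus G_n\oplus G_{n+1}$; its components define $a^-(i)f,a^0(i)f,a^+(i)f$ respectively, extended linearly to $F$. $U_i:=a^-(i)+\tfrac12a^0(i)$. $(X_1,\dots,X_d)$ is a $d$-dimensional $1$-Meixner random vector if there are reals $\alpha_{i,j,k},\beta_{i,j}$ with $[U_i,X_j]=\sum_k\alpha_{i,j,k}X_k+\beta_{i,j}I$ on $F$ for all $i,j$ (with $X_j$ the multiplication operator, $I$ the identity). *)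

theory Defs
  imports "HOL-Probability.Probability"
begin

text \<open>Random variables are indexed 0..d-1 (the paper's 1..d). Multi-indices are
functions nat => nat, of which only the values at 0..d-1 matter.\<close>

definition pmono :: "(nat \<Rightarrow> 'a \<Rightarrow> real) \<Rightarrow> nat \<Rightarrow> (nat \<Rightarrow> nat) \<Rightarrow> 'a \<Rightarrow> complex" where
  "pmono X d k \<omega> = (\<Prod>i<d. complex_of_real (X i \<omega>) ^ k i)"

definition multi_idx :: "nat \<Rightarrow> nat \<Rightarrow> (nat \<Rightarrow> nat) set" where
  "multi_idx d n = {k. (\<forall>i\<ge>d. k i = 0) \<and> (\<Sum>i<d. k i) \<le> n}"

definition polyF :: "(nat \<Rightarrow> 'a \<Rightarrow> real) \<Rightarrow> nat \<Rightarrow> nat \<Rightarrow> ('a \<Rightarrow> complex) set" where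
  "polyF X d n = {f. \<exists>c. f = (\<lambda>\<omega>. \<Sum>k\<in>multi_idx d n. c k * pmono X d k \<omega>)}"

definition polyAll :: "(nat \<Rightarrow> 'a \<Rightarrow> real) \<Rightarrow> nat \<Rightarrow> ('a \<Rightarrow> complex) set" where
  "polyAll X d = (\<Union>n. polyF X d n)"

definition linner :: "'a measure \<Rightarrow> ('a \<Rightarrow> complex) \<Rightarrow> ('a \<Rightarrow> complex) \<Rightarrow> complex" where
  "linner M f g = (\<integral>\<omega>. f \<omega> * cnj (g \<omega>) \<partial>M)"

definition polyG :: "'a measure \<Rightarrow> (nat \<Rightarrow> 'a \<Rightarrow> real) \<Rightarrow> nat \<Rightarrow> nat \<Rightarrow> ('a \<Rightarrow> complex) set" where
  "polyG M X d n = (if n = 0 then polyF X d 0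
     else {f \<in> polyF X d n. \<forall>g \<in> polyF X d (n - 1). linner M f g = 0})"

text \<open>Orthogonal projection onto G_n (a representative; unique up to P-null sets).
For f in F this is the G_n-component of f in F = direct sum of the G_n.\<close>
definition projG :: "'a measure \<Rightarrow> (nat \<Rightarrow> 'a \<Rightarrow> real) \<Rightarrow> nat \<Rightarrow> nat \<Rightarrow> ('a \<Rightarrow> complex) \<Rightarrow> ('a \<Rightarrow> complex)" where
  "projG M X d n f = (SOME g. g \<in> polyG M X d n \<and>
      (\<forall>h \<in> polyG M X d n. linner M (\<lambda>\<omega>. f \<omega> - g \<omega>) h = 0))"

definition pdeg :: "(nat \<Rightarrow> 'a \<Rightarrow> real) \<Rightarrow> nat \<Rightarrow> ('a \<Rightarrow> complex) \<Rightarrow> nat" where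
  "pdeg X d f = (LEAST n. f \<in> polyF X d n)"

text \<open>a^-(i) and a^0(i), extended linearly: for f in G_n, a^-(i) f is the G_{n-1}
component of X_i f and a^0(i) f its G_n component.\<close>
definition aminus :: "'a measure \<Rightarrow> (nat \<Rightarrow> 'a \<Rightarrow> real) \<Rightarrow> nat \<Rightarrow> nat \<Rightarrow> ('a \<Rightarrow> complex) \<Rightarrow> ('a \<Rightarrow> complex)" where
  "aminus M X d i f = (\<lambda>\<omega>. \<Sum>n\<in>{1..pdeg X d f}.
      projG M X d (n - 1) (\<lambda>\<omega>'. complex_of_real (X i \<omega>') * projG M X d n f \<omega>') \<omega>)"

definition azero :: "'a measure \<Rightarrow> (nat \<Rightarrow> 'a \<Rightarrow> real) \<Rightarrow> nat \<Rightarrow> nat \<Rightarrow> ('a \<Rightarrow> complex) \<Rightarrow> ('a \<Rightarrow> complex)" where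
  "azero M X d i f = (\<lambda>\<omega>. \<Sum>n\<in>{..pdeg X d f}.
      projG M X d n (\<lambda>\<omega>'. complex_of_real (X i \<omega>') * projG M X d n f \<omega>') \<omega>)"

definition Uop :: "'a measure \<Rightarrow> (nat \<Rightarrow> 'a \<Rightarrow> real) \<Rightarrow> nat \<Rightarrow> nat \<Rightarrow> ('a \<Rightarrow> complex) \<Rightarrow> ('a \<Rightarrow> complex)" where
  "Uop M X d i f = (\<lambda>\<omega>. aminus M X d i f \<omega> + azero M X d i f \<omega> / 2)"

definition meixner_comm :: "'a measure \<Rightarrow> (nat \<Rightarrow> 'a \<Rightarrow> real) \<Rightarrow> nat \<Rightarrow>
    (nat \<Rightarrow> nat \<Rightarrow> nat \<Rightarrow> real) \<Rightarrow> (nat \<Rightarrow> nat \<Rightarrow> real) \<Rightarrow> bool" where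
  "meixner_comm M X d \<alpha> \<beta> \<longleftrightarrow> (\<forall>i<d. \<forall>j<d. \<forall>f \<in> polyAll X d.
     AE \<omega> in M. Uop M X d i (\<lambda>\<omega>'. complex_of_real (X j \<omega>') * f \<omega>') \<omega>
                 - complex_of_real (X j \<omega>) * Uop M X d i f \<omega>
               = complex_of_real (\<Sum>k<d. \<alpha> i j k * X k \<omega>) * f \<omega>
                 + complex_of_real (\<beta> i j) * f \<omega>)"

definition one_meixner :: "'a measure \<Rightarrow> (nat \<Rightarrow> 'a \<Rightarrow> real) \<Rightarrow> nat \<Rightarrow> bool" where
  "one_meixner M X d \<longleftrightarrow> (\<exists>\<alpha> \<beta>. meixner_comm M X d \<alpha> \<beta>)"

end

theory Submission
  imports Defs
begin

lemma pow_sum_le: "0 \<le> (a::real) \<Longrightarrow> 0 \<le> b \<Longrightarrow> (a+b)^N \<le> 2^N * (a^N + b^N)"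
proof -
  assume a: "0 \<le> a" "0 \<le> b"
  have "(a+b)^N \<le> (2 * max a b)^N" using a by (intro power_mono) auto
  also have "\<dots> = 2^N * (max a b)^N" by (simp add: power_mult_distrib)
  also have "(max a b)^N \<le> a^N + b^N" using a by (cases "a \<le> b") (auto simp: max_def)
  hence "2^N * (max a b)^N \<le> 2^N * (a^N + b^N)" by simp
  finally show ?thesis .
qed

lemma multi_idx_finite: "finite (multi_idx d n)"
proof -
  have "multi_idx d n \<subseteq> {f. \<forall>x. (x \<in> {..<d} \<longrightarrow> f x \<in> {..n}) \<and> (x \<notin> {..<d} \<longrightarrow> f x = 0)}"
  proof
    fix k assume "k \<in> multi_idx d n"
    hence k: "\<forall>i\<ge>d. k i = 0" "(\<Sum>i<d. k i) \<le> n" by (auto simp: multi_idx_def)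
    { fix x assume "x < d"
      hence "k x \<le> (\<Sum>i<d. k i)" by (intro member_le_sum) auto
      hence "k x \<le> n" using k by simp }
    thus "k \<in> {f. \<forall>x. (x \<in> {..<d} \<longrightarrow> f x \<in> {..n}) \<and> (x \<notin> {..<d} \<longrightarrow> f x = 0)}" using k by auto
  qed
  thus ?thesis by (rule finite_subset) (rule finite_set_of_finite_funs, auto)
qed

lemma multi_idx_0: "multi_idx d 0 = {\<lambda>_. 0}"
  by (auto simp: multi_idx_def fun_eq_iff) (metis leI lessThan_iff)

lemma pmono_0: "pmono X d (\<lambda>_. 0) = (\<lambda>_. 1)"
  by (auto simp: pmono_def)

lemma polyF_0: "polyF X d 0 = {f. \<exists>c. f = (\<lambda>_. c)}"
  by (auto simp: polyF_def multi_idx_0 pmono_0)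

lemma pmono_shift:
  assumes "j < d"
  shows "pmono X d (k(j := Suc (k j))) \<omega> = complex_of_real (X j \<omega>) * pmono X d k \<omega>"
proof -
  have "pmono X d (k(j := Suc (k j))) \<omega> = (\<Prod>i<d. complex_of_real (X i \<omega>) ^ k i * (if i = j then complex_of_real (X i \<omega>) else 1))"
    unfolding pmono_def by (intro prod.cong) auto
  also have "\<dots> = pmono X d k \<omega> * complex_of_real (X j \<omega>)"
    unfolding prod.distrib pmono_def using assms by (simp add: prod.delta)
  finally show ?thesis by simp
qed

lemma polyF_mult_X:
  assumes "j < d" "f \<in> polyF X d n"
  shows "(\<lambda>\<omega>. complex_of_real (X j \<omega>) * f \<omega>) \<in> polyF X d (Suc n)"
proof -
  obtain c where f: "f = (\<lambda>\<omega>. \<Sum>k\<in>multi_idx d n. c k * pmono X d k \<omega>)" using assms by (auto simp: polyF_def)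
  define sh where "sh = (\<lambda>k::nat\<Rightarrow>nat. k(j := Suc (k j)))"
  define S where "S = multi_idx d n"
  have inj: "inj_on sh S" unfolding sh_def inj_on_def
    by (auto simp: fun_eq_iff)
  have sub: "sh ` S \<subseteq> multi_idx d (Suc n)"
  proof
    fix m assume "m \<in> sh ` S"
    then obtain k where k: "k \<in> S" "m = sh k" by auto
    have "(\<Sum>i<d. m i) = (\<Sum>i<d. k i + (if i = j then 1 else 0))"
      unfolding k sh_def by (intro sum.cong) auto
    also have "\<dots> = (\<Sum>i<d. k i) + 1" using assms(1) by (simp add: sum.distrib)
    finally show "m \<in> multi_idx d (Suc n)" using k assms(1) unfolding S_def sh_def multi_idx_def by auto
  qed
  define c' where "c' = (\<lambda>m. if m \<in> sh ` S then c (inv_into S sh m) else 0)"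
  have cs: "\<And>k. k \<in> S \<Longrightarrow> c' (sh k) = c k" using inj by (auto simp: c'_def inv_into_f_f)
  have "(\<lambda>\<omega>. complex_of_real (X j \<omega>) * f \<omega>) = (\<lambda>\<omega>. \<Sum>m\<in>multi_idx d (Suc n). c' m * pmono X d m \<omega>)"
  proof
    fix \<omega>
    have "(\<Sum>m\<in>multi_idx d (Suc n). c' m * pmono X d m \<omega>) = (\<Sum>m\<in>sh ` S. c' m * pmono X d m \<omega>)"
      using sub multi_idx_finite by (intro sum.mono_neutral_right) (auto simp: c'_def)
    also have "\<dots> = (\<Sum>k\<in>S. c' (sh k) * pmono X d (sh k) \<omega>)"
      using inj by (simp add: sum.reindex)
    also have "\<dots> = (\<Sum>k\<in>S. complex_of_real (X j \<omega>) * (c k * pmono X d k \<omega>))"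
      using inj assms(1) cs by (intro sum.cong) (auto simp: sh_def pmono_shift)
    finally show "complex_of_real (X j \<omega>) * f \<omega> = (\<Sum>m\<in>multi_idx d (Suc n). c' m * pmono X d m \<omega>)"
      by (simp add: f S_def sum_distrib_left)
  qed
  thus ?thesis by (auto simp: polyF_def)
qed

lemma polyF_mono:
  assumes "n \<le> m" "f \<in> polyF X d n" shows "f \<in> polyF X d m"
proof -
  obtain c where f: "f = (\<lambda>\<omega>. \<Sum>k\<in>multi_idx d n. c k * pmono X d k \<omega>)" using assms by (auto simp: polyF_def)
  have sub: "multi_idx d n \<subseteq> multi_idx d m" using assms(1) by (auto simp: multi_idx_def)
  have "f = (\<lambda>\<omega>. \<Sum>k\<in>multi_idx d m. (if k \<in> multi_idx d n then c k else 0) * pmono X d k \<omega>)"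
    unfolding f using sub multi_idx_finite
    by (intro ext sum.mono_neutral_cong_left) auto
  thus ?thesis by (auto simp: polyF_def)
qed

lemma polyF_diff:
  assumes "f \<in> polyF X d n" "g \<in> polyF X d n" shows "(\<lambda>\<omega>. f \<omega> - g \<omega>) \<in> polyF X d n"
proof -
  obtain c where f: "f = (\<lambda>\<omega>. \<Sum>k\<in>multi_idx d n. c k * pmono X d k \<omega>)" using assms by (auto simp: polyF_def)
  obtain c' where g: "g = (\<lambda>\<omega>. \<Sum>k\<in>multi_idx d n. c' k * pmono X d k \<omega>)" using assms by (auto simp: polyF_def)
  have "(\<lambda>\<omega>. f \<omega> - g \<omega>) = (\<lambda>\<omega>. \<Sum>k\<in>multi_idx d n. (c k - c' k) * pmono X d k \<omega>)"
    by (simp add: f g sum_subtractf left_diff_distrib)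
  thus ?thesis by (auto simp: polyF_def)
qed

lemma polyF_one: "(\<lambda>_. 1) \<in> polyF X d 0" by (auto simp: polyF_0)

lemma polyF_X: "j < d \<Longrightarrow> (\<lambda>\<omega>. complex_of_real (X j \<omega>)) \<in> polyF X d 1"
  using polyF_mult_X[OF _ polyF_one, of j d X] by simp

definition prodL :: "(nat \<Rightarrow> 'a \<Rightarrow> real) \<Rightarrow> nat list \<Rightarrow> 'a \<Rightarrow> complex" where
  "prodL X js = (\<lambda>\<omega>. prod_list (map (\<lambda>j. complex_of_real (X j \<omega>)) js))"

lemma prodL_Nil: "prodL X [] = (\<lambda>_. 1)" by (simp add: prodL_def)
lemma prodL_Cons: "prodL X (j # js) = (\<lambda>\<omega>. complex_of_real (X j \<omega>) * prodL X js \<omega>)"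
  by (simp add: prodL_def)
lemma prodL_append: "prodL X (js @ ks) \<omega> = prodL X js \<omega> * prodL X ks \<omega>"
  by (simp add: prodL_def)

lemma prodL_polyF: "set js \<subseteq> {..<d} \<Longrightarrow> prodL X js \<in> polyF X d (length js)"
  by (induction js) (auto simp: prodL_Nil prodL_Cons polyF_one intro!: polyF_mult_X)


locale mx = prob_space M for M :: "'a measure" +
  fixes X :: "nat \<Rightarrow> 'a \<Rightarrow> real" and d :: nat
  assumes Xmeas: "\<And>k. k < d \<Longrightarrow> X k \<in> borel_measurable M"
  and Xmom: "\<And>k n. k < d \<Longrightarrow> integrable M (\<lambda>\<omega>. \<bar>X k \<omega>\<bar> ^ n)"
  and Xmean: "\<And>k. k < d \<Longrightarrow> (\<integral>\<omega>. X k \<omega> \<partial>M) = 0"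
begin

definition W :: "'a \<Rightarrow> real" where "W \<omega> = 1 + (\<Sum>i<d. \<bar>X i \<omega>\<bar>)"

lemma W_ge1: "1 \<le> W \<omega>" unfolding W_def by (simp add: sum_nonneg)

lemma W_int_aux: "e \<le> d \<Longrightarrow> integrable M (\<lambda>\<omega>. (1 + (\<Sum>i<e. \<bar>X i \<omega>\<bar>)) ^ N)"
proof (induction e arbitrary: N)
  case 0 thus ?case by simp
next
  case (Suc e)
  have m: "(\<lambda>\<omega>. (1 + (\<Sum>i<Suc e. \<bar>X i \<omega>\<bar>)) ^ N) \<in> borel_measurable M"
    using Suc.prems by (intro borel_measurable_power borel_measurable_add borel_measurable_sum) (auto intro!: Xmeas borel_measurable_abs)
  have i: "integrable M (\<lambda>\<omega>. 2^N * ((1 + (\<Sum>i<e. \<bar>X i \<omega>\<bar>)) ^ N + \<bar>X e \<omega>\<bar> ^ N))"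
    using Suc.IH Xmom[of e] Suc.prems by (intro integrable_mult_right Bochner_Integration.integrable_add) auto
  show ?case
  proof (rule Bochner_Integration.integrable_bound[OF i m], rule AE_I2)
    fix \<omega>
    have "(1 + (\<Sum>i<Suc e. \<bar>X i \<omega>\<bar>)) ^ N = ((1 + (\<Sum>i<e. \<bar>X i \<omega>\<bar>)) + \<bar>X e \<omega>\<bar>) ^ N" by (simp add: add.assoc)
    also have "\<dots> \<le> 2^N * ((1 + (\<Sum>i<e. \<bar>X i \<omega>\<bar>)) ^ N + \<bar>X e \<omega>\<bar> ^ N)"
      by (rule pow_sum_le) (auto simp: sum_nonneg)
    finally show "norm ((1 + (\<Sum>i<Suc e. \<bar>X i \<omega>\<bar>)) ^ N) \<le> norm (2^N * ((1 + (\<Sum>i<e. \<bar>X i \<omega>\<bar>)) ^ N + \<bar>X e \<omega>\<bar> ^ N))"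
      by (simp add: sum_nonneg)
  qed
qed

lemma W_int: "integrable M (\<lambda>\<omega>. W \<omega> ^ N)"
  unfolding W_def using W_int_aux[of d] by simp

lemma W_meas: "W \<in> borel_measurable M"
  unfolding W_def by (auto intro!: Xmeas borel_measurable_add borel_measurable_sum borel_measurable_abs)

definition good :: "('a \<Rightarrow> complex) \<Rightarrow> bool" where
  "good f \<longleftrightarrow> f \<in> borel_measurable M \<and> (\<exists>C N. \<forall>\<omega>\<in>space M. cmod (f \<omega>) \<le> C * W \<omega> ^ N)"

lemma bounded_integrable:
  fixes f :: "'a \<Rightarrow> 'b::{banach,second_countable_topology}"
  assumes "f \<in> borel_measurable M" "\<forall>\<omega>\<in>space M. norm (f \<omega>) \<le> C * W \<omega> ^ N"
  shows "integrable M f"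
proof (rule Bochner_Integration.integrable_bound[OF _ assms(1)])
  show "integrable M (\<lambda>\<omega>. C * W \<omega> ^ N)" by (intro integrable_mult_right W_int)
  show "AE x in M. norm (f x) \<le> norm (C * W x ^ N)"
  proof (intro AE_I2 impI)
    fix x assume "x \<in> space M"
    hence "norm (f x) \<le> C * W x ^ N" using assms(2) by auto
    also have "\<dots> \<le> norm (C * W x ^ N)" by simp
    finally show "norm (f x) \<le> norm (C * W x ^ N)" .
  qed
qed

lemma good_integrable: "good f \<Longrightarrow> integrable M f"
  unfolding good_def using bounded_integrable by auto

lemma good_add: assumes "good f" "good g" shows "good (\<lambda>\<omega>. f \<omega> + g \<omega>)"
proof -
  obtain C N where f: "\<forall>\<omega>\<in>space M. cmod (f \<omega>) \<le> C * W \<omega> ^ N" using assms by (auto simp: good_def)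
  obtain C' N' where g: "\<forall>\<omega>\<in>space M. cmod (g \<omega>) \<le> C' * W \<omega> ^ N'" using assms by (auto simp: good_def)
  have "\<forall>\<omega>\<in>space M. cmod (f \<omega> + g \<omega>) \<le> (\<bar>C\<bar> + \<bar>C'\<bar>) * W \<omega> ^ max N N'"
  proof
    fix \<omega> assume w: "\<omega> \<in> space M"
    have W1: "W \<omega> ^ N \<le> W \<omega> ^ max N N'" "W \<omega> ^ N' \<le> W \<omega> ^ max N N'"
      using W_ge1 by (auto intro: power_increasing)
    have p: "0 \<le> W \<omega> ^ N" "0 \<le> W \<omega> ^ N'" using W_ge1[of \<omega>] by auto
    have "C * W \<omega> ^ N \<le> \<bar>C\<bar> * W \<omega> ^ N" using p by (intro mult_right_mono) auto
    also have "\<dots> \<le> \<bar>C\<bar> * W \<omega> ^ max N N'" using W1 by (intro mult_left_mono) auto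
    finally have "C * W \<omega> ^ N \<le> \<bar>C\<bar> * W \<omega> ^ max N N'" .
    moreover have "C' * W \<omega> ^ N' \<le> \<bar>C'\<bar> * W \<omega> ^ N'" using p by (intro mult_right_mono) auto
    moreover have "\<bar>C'\<bar> * W \<omega> ^ N' \<le> \<bar>C'\<bar> * W \<omega> ^ max N N'" using W1 by (intro mult_left_mono) auto
    moreover have "cmod (f \<omega>) \<le> C * W \<omega> ^ N" "cmod (g \<omega>) \<le> C' * W \<omega> ^ N'" using f g w by auto
    moreover have "cmod (f \<omega> + g \<omega>) \<le> cmod (f \<omega>) + cmod (g \<omega>)" by (rule norm_triangle_ineq)
    ultimately show "cmod (f \<omega> + g \<omega>) \<le> (\<bar>C\<bar> + \<bar>C'\<bar>) * W \<omega> ^ max N N'"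
      unfolding distrib_right by linarith
  qed
  moreover have "(\<lambda>\<omega>. f \<omega> + g \<omega>) \<in> borel_measurable M" using assms unfolding good_def by (intro borel_measurable_add) auto
  ultimately show ?thesis unfolding good_def by blast
qed

lemma good_mult: assumes "good f" "good g" shows "good (\<lambda>\<omega>. f \<omega> * g \<omega>)"
proof -
  obtain C N where f: "\<forall>\<omega>\<in>space M. cmod (f \<omega>) \<le> C * W \<omega> ^ N" using assms by (auto simp: good_def)
  obtain C' N' where g: "\<forall>\<omega>\<in>space M. cmod (g \<omega>) \<le> C' * W \<omega> ^ N'" using assms by (auto simp: good_def)
  have "\<forall>\<omega>\<in>space M. cmod (f \<omega> * g \<omega>) \<le> (C * C') * W \<omega> ^ (N + N')"
  proof
    fix \<omega> assume w: "\<omega> \<in> space M"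
    have "cmod (f \<omega> * g \<omega>) = cmod (f \<omega>) * cmod (g \<omega>)" by (simp add: norm_mult)
    also have "\<dots> \<le> (C * W \<omega> ^ N) * (C' * W \<omega> ^ N')"
    proof -
      have a: "cmod (f \<omega>) \<le> C * W \<omega> ^ N" "cmod (g \<omega>) \<le> C' * W \<omega> ^ N'" using f g w by auto
      have b: "0 \<le> C * W \<omega> ^ N" using a(1) norm_ge_zero order_trans by blast
      show ?thesis by (rule mult_mono[OF a(1) a(2) b norm_ge_zero])
    qed
    finally show "cmod (f \<omega> * g \<omega>) \<le> (C * C') * W \<omega> ^ (N + N')" by (simp add: power_add ac_simps)
  qed
  moreover have "(\<lambda>\<omega>. f \<omega> * g \<omega>) \<in> borel_measurable M" using assms unfolding good_def by (intro borel_measurable_times) auto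
  ultimately show ?thesis unfolding good_def by blast
qed

lemma good_const: "good (\<lambda>_. c)"
proof -
  have "\<forall>\<omega>\<in>space M. cmod c \<le> cmod c * W \<omega> ^ 0" by simp
  thus ?thesis unfolding good_def by (intro conjI borel_measurable_const) blast
qed

lemma good_X: assumes "j < d" shows "good (\<lambda>\<omega>. complex_of_real (X j \<omega>))"
proof -
  have "\<forall>\<omega>\<in>space M. cmod (complex_of_real (X j \<omega>)) \<le> 1 * W \<omega> ^ 1"
  proof
    fix \<omega>
    have "\<bar>X j \<omega>\<bar> \<le> (\<Sum>i<d. \<bar>X i \<omega>\<bar>)" using assms by (intro member_le_sum) auto
    thus "cmod (complex_of_real (X j \<omega>)) \<le> 1 * W \<omega> ^ 1" by (simp add: W_def)
  qed
  moreover have "(\<lambda>\<omega>. complex_of_real (X j \<omega>)) \<in> borel_measurable M"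
  proof (rule borel_measurable_continuous_on[where f=complex_of_real])
    show "continuous_on UNIV complex_of_real" by (intro continuous_intros)
  qed (use assms Xmeas in auto)
  ultimately show ?thesis unfolding good_def by blast
qed

lemma good_cnj: "good f \<Longrightarrow> good (\<lambda>\<omega>. cnj (f \<omega>))"
proof -
  assume g: "good f"
  have c: "continuous_on UNIV (cnj :: complex \<Rightarrow> complex)" by (intro continuous_intros)
  have "(\<lambda>\<omega>. cnj (f \<omega>)) \<in> borel_measurable M"
    using g unfolding good_def by (intro borel_measurable_continuous_on[OF c]) auto
  thus ?thesis using g unfolding good_def by auto
qed

lemma good_cmult: "good f \<Longrightarrow> good (\<lambda>\<omega>. c * f \<omega>)"
  using good_mult[OF good_const] by blast

lemma good_uminus: "good f \<Longrightarrow> good (\<lambda>\<omega>. - f \<omega>)"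
  using good_cmult[of f "-1"] by simp

lemma good_diff: "good f \<Longrightarrow> good g \<Longrightarrow> good (\<lambda>\<omega>. f \<omega> - g \<omega>)"
  using good_add[OF _ good_uminus] by simp

lemma good_sum: "(\<And>k. k \<in> I \<Longrightarrow> good (\<phi> k)) \<Longrightarrow> good (\<lambda>\<omega>. \<Sum>k\<in>I. \<phi> k \<omega>)"
proof (induction I rule: infinite_finite_induct)
  case (infinite A) thus ?case by (simp add: good_const)
next
  case empty thus ?case by (simp add: good_const)
next
  case (insert x F) thus ?case by (simp add: good_add)
qed

lemma good_prod: "(\<And>k. k \<in> I \<Longrightarrow> good (\<phi> k)) \<Longrightarrow> good (\<lambda>\<omega>. \<Prod>k\<in>I. \<phi> k \<omega>)"
proof (induction I rule: infinite_finite_induct)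
  case (infinite A) thus ?case by (simp add: good_const)
next
  case empty thus ?case by (simp add: good_const)
next
  case (insert x F) thus ?case by (simp add: good_mult)
qed

lemma good_power: "good f \<Longrightarrow> good (\<lambda>\<omega>. f \<omega> ^ n)"
  by (induction n) (simp_all add: good_const good_mult)

lemma good_pmono: "good (pmono X d k)"
  unfolding pmono_def by (intro good_prod good_power good_X) auto

lemma good_polyF: "f \<in> polyF X d n \<Longrightarrow> good f"
  unfolding polyF_def by (auto intro!: good_sum good_cmult good_pmono)

lemma good_polyAll: "f \<in> polyAll X d \<Longrightarrow> good f"
  unfolding polyAll_def by (auto intro: good_polyF)

lemma good_prodL: "set js \<subseteq> {..<d} \<Longrightarrow> good (prodL X js)"
  using prodL_polyF good_polyF by blast

lemma good_div2: "good f \<Longrightarrow> good (\<lambda>\<omega>. f \<omega> / 2)"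
  using good_cmult[of f "1/2"] by simp

lemma good_inner_int: "good f \<Longrightarrow> good g \<Longrightarrow> integrable M (\<lambda>\<omega>. f \<omega> * cnj (g \<omega>))"
  by (intro good_integrable good_mult good_cnj)

lemma linner_add_left: "good f \<Longrightarrow> good g \<Longrightarrow> good h \<Longrightarrow>
  linner M (\<lambda>\<omega>. f \<omega> + g \<omega>) h = linner M f h + linner M g h"
  unfolding linner_def using good_inner_int[of f h] good_inner_int[of g h]
  by (simp add: distrib_right)

lemma linner_diff_left: "good f \<Longrightarrow> good g \<Longrightarrow> good h \<Longrightarrow>
  linner M (\<lambda>\<omega>. f \<omega> - g \<omega>) h = linner M f h - linner M g h"
  unfolding linner_def using good_inner_int[of f h] good_inner_int[of g h]
  by (simp add: left_diff_distrib)

lemma linner_smult_left: "linner M (\<lambda>\<omega>. c * f \<omega>) h = c * linner M f h"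
  unfolding linner_def by (simp add: mult.assoc)

lemma linner_smult_right: "linner M h (\<lambda>\<omega>. c * f \<omega>) = cnj c * linner M h f"
  unfolding linner_def by (simp add: ac_simps)

lemma linner_sym: "linner M g f = cnj (linner M f g)"
proof -
  have "cnj (linner M f g) = (\<integral>\<omega>. cnj (f \<omega> * cnj (g \<omega>)) \<partial>M)" unfolding linner_def by (rule Bochner_Integration.integral_cnj[symmetric])
  thus ?thesis unfolding linner_def by (simp add: mult.commute)
qed

lemma linner_sum_right: "finite I \<Longrightarrow> (\<And>k. k \<in> I \<Longrightarrow> good (\<phi> k)) \<Longrightarrow> good h \<Longrightarrow>
  linner M h (\<lambda>\<omega>. \<Sum>k\<in>I. c k * \<phi> k \<omega>) = (\<Sum>k\<in>I. cnj (c k) * linner M h (\<phi> k))"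
proof -
  assume a: "finite I" "\<And>k. k \<in> I \<Longrightarrow> good (\<phi> k)" "good h"
  have eq: "(\<lambda>\<omega>. h \<omega> * cnj (\<Sum>k\<in>I. c k * \<phi> k \<omega>)) = (\<lambda>\<omega>. \<Sum>k\<in>I. cnj (c k) * (h \<omega> * cnj (\<phi> k \<omega>)))"
    by (simp add: sum_distrib_left ac_simps)
  have "linner M h (\<lambda>\<omega>. \<Sum>k\<in>I. c k * \<phi> k \<omega>) = (\<Sum>k\<in>I. \<integral>\<omega>. cnj (c k) * (h \<omega> * cnj (\<phi> k \<omega>)) \<partial>M)"
    unfolding linner_def eq using a by (intro Bochner_Integration.integral_sum integrable_mult_right good_inner_int) auto
  also have "\<dots> = (\<Sum>k\<in>I. cnj (c k) * linner M h (\<phi> k))" unfolding linner_def by simp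
  finally show ?thesis .
qed
   
lemma linner_null: assumes "good r" "good u" "linner M u u = 0" shows "linner M r u = 0"
proof -
  have "(\<lambda>\<omega>. u \<omega> * cnj (u \<omega>)) = (\<lambda>\<omega>. complex_of_real ((cmod (u \<omega>))^2))"
    by (intro ext) (rule complex_norm_square[symmetric])
  hence "linner M u u = (\<integral>\<omega>. complex_of_real ((cmod (u \<omega>))^2) \<partial>M)" unfolding linner_def by (simp only:)
  also have "\<dots> = complex_of_real (\<integral>\<omega>. (cmod (u \<omega>))^2 \<partial>M)" by (rule Bochner_Integration.integral_complex_of_real)
  finally have "complex_of_real (\<integral>\<omega>. (cmod (u \<omega>))^2 \<partial>M) = 0" using assms(3) by simp
  hence "(\<integral>\<omega>. (cmod (u \<omega>))^2 \<partial>M) = 0" by simp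
  moreover have "integrable M (\<lambda>\<omega>. (cmod (u \<omega>))^2)"
  proof -
    have "integrable M (\<lambda>\<omega>. u \<omega> * cnj (u \<omega>))" using assms by (intro good_inner_int)
    hence "integrable M (\<lambda>\<omega>. cmod (u \<omega> * cnj (u \<omega>)))" by simp
    thus ?thesis by (simp add: norm_mult power2_eq_square)
  qed
  ultimately have "AE \<omega> in M. (cmod (u \<omega>))^2 = 0"
    by (subst (asm) integral_nonneg_eq_0_iff_AE) auto
  hence "AE \<omega> in M. r \<omega> * cnj (u \<omega>) = 0" by eventually_elim simp
  hence "linner M r u = (\<integral>\<omega>. 0 \<partial>M)" unfolding linner_def
    using good_mult[OF assms(1) good_cnj[OF assms(2)]] by (intro integral_cong_AE) (auto simp: good_def)
  thus ?thesis by simp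
qed

end


context mx begin

lemma linner_add_right: "good f \<Longrightarrow> good g \<Longrightarrow> good h \<Longrightarrow>
  linner M h (\<lambda>\<omega>. f \<omega> + g \<omega>) = linner M h f + linner M h g"
  by (subst (1 2 3) linner_sym) (simp add: linner_add_left)

lemma linner_span_zero:
  assumes "finite I" "\<And>k. k \<in> I \<Longrightarrow> good (\<phi> k)" "good r" "\<forall>l\<in>I. linner M r (\<phi> l) = 0"
  shows "linner M r (\<lambda>\<omega>. \<Sum>k\<in>I. c k * \<phi> k \<omega>) = 0"
  using assms by (simp add: linner_sum_right)

lemma proj_exists:
  assumes "finite I" "\<And>k. k \<in> I \<Longrightarrow> good (\<phi> k)" "good f"
  shows "\<exists>c. \<forall>l\<in>I. linner M (\<lambda>\<omega>. f \<omega> - (\<Sum>k\<in>I. c k * \<phi> k \<omega>)) (\<phi> l) = 0"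
  using assms
proof (induction I arbitrary: f rule: finite_induct)
  case empty thus ?case by simp
next
  case (insert a I)
  have gI: "\<And>k. k \<in> I \<Longrightarrow> good (\<phi> k)" and ga': "good (\<phi> a)" using insert.prems by auto
  obtain cf where cf: "\<forall>l\<in>I. linner M (\<lambda>\<omega>. f \<omega> - (\<Sum>k\<in>I. cf k * \<phi> k \<omega>)) (\<phi> l) = 0"
    using insert.IH[OF gI insert.prems(2)] by blast
  obtain ca where ca: "\<forall>l\<in>I. linner M (\<lambda>\<omega>. \<phi> a \<omega> - (\<Sum>k\<in>I. ca k * \<phi> k \<omega>)) (\<phi> l) = 0"
    using insert.IH[OF gI ga'] by blast
  define gf where "gf = (\<lambda>\<omega>. \<Sum>k\<in>I. cf k * \<phi> k \<omega>)"
  define ga where "ga = (\<lambda>\<omega>. \<Sum>k\<in>I. ca k * \<phi> k \<omega>)"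
  define r where "r = (\<lambda>\<omega>. f \<omega> - gf \<omega>)"
  define u where "u = (\<lambda>\<omega>. \<phi> a \<omega> - ga \<omega>)"
  have ggf: "good gf" "good ga" unfolding gf_def ga_def using gI by (auto intro!: good_sum good_cmult)
  have gr: "good r" "good u" unfolding r_def u_def using ggf insert.prems ga' by (auto intro: good_diff)
  have rI: "\<forall>l\<in>I. linner M r (\<phi> l) = 0" using cf unfolding r_def gf_def .
  have uI: "\<forall>l\<in>I. linner M u (\<phi> l) = 0" using ca unfolding u_def ga_def .
  have rga: "linner M r ga = 0" unfolding ga_def using linner_span_zero[OF insert.hyps(1) gI gr(1) rI] .
  have uga: "linner M u ga = 0" unfolding ga_def using linner_span_zero[OF insert.hyps(1) gI gr(2) uI] .
  have phia: "\<phi> a = (\<lambda>\<omega>. u \<omega> + ga \<omega>)" unfolding u_def by simp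
  show ?case
  proof (cases "linner M u u = 0")
    case True
    define c where "c = (\<lambda>k. if k = a then 0 else cf k)"
    have sumeq: "(\<lambda>\<omega>. f \<omega> - (\<Sum>k\<in>insert a I. c k * \<phi> k \<omega>)) = r"
    proof
      fix \<omega>
      have "(\<Sum>k\<in>I. c k * \<phi> k \<omega>) = gf \<omega>" unfolding gf_def c_def using insert.hyps(2)
        by (intro sum.cong) auto
      thus "f \<omega> - (\<Sum>k\<in>insert a I. c k * \<phi> k \<omega>) = r \<omega>"
        using insert.hyps by (simp add: c_def r_def)
    qed
    have "linner M r (\<phi> a) = 0"
      unfolding phia using linner_add_right[OF gr(2) ggf(2) gr(1)] linner_null[OF gr(1) gr(2) True] rga by simp
    hence "\<forall>l\<in>insert a I. linner M (\<lambda>\<omega>. f \<omega> - (\<Sum>k\<in>insert a I. c k * \<phi> k \<omega>)) (\<phi> l) = 0"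
      unfolding sumeq using rI by auto
    thus ?thesis by blast
  next
    case False
    define t where "t = linner M r u / linner M u u"
    define c where "c = (\<lambda>k. if k = a then t else cf k - t * ca k)"
    have sumeq: "(\<lambda>\<omega>. f \<omega> - (\<Sum>k\<in>insert a I. c k * \<phi> k \<omega>)) = (\<lambda>\<omega>. r \<omega> - t * u \<omega>)"
    proof
      fix \<omega>
      have "(\<Sum>k\<in>I. c k * \<phi> k \<omega>) = (\<Sum>k\<in>I. cf k * \<phi> k \<omega> - t * (ca k * \<phi> k \<omega>))" unfolding c_def using insert.hyps(2)
        by (intro sum.cong) (auto simp: algebra_simps)
      also have "\<dots> = gf \<omega> - t * ga \<omega>" unfolding gf_def ga_def by (simp add: sum_subtractf sum_distrib_left)
      finally show "f \<omega> - (\<Sum>k\<in>insert a I. c k * \<phi> k \<omega>) = r \<omega> - t * u \<omega>"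
        using insert.hyps by (simp add: c_def r_def u_def algebra_simps)
    qed
    have gtu: "good (\<lambda>\<omega>. t * u \<omega>)" using gr(2) by (rule good_cmult)
    have lin: "\<And>v. good v \<Longrightarrow> linner M (\<lambda>\<omega>. r \<omega> - t * u \<omega>) v = linner M r v - t * linner M u v"
      using linner_diff_left[OF gr(1) gtu] linner_smult_left by simp
    have "linner M (\<lambda>\<omega>. r \<omega> - t * u \<omega>) (\<phi> a) = 0"
    proof -
      have g2: "good (\<lambda>\<omega>. r \<omega> - t * u \<omega>)" using gr(1) gtu by (rule good_diff)
      have "linner M (\<lambda>\<omega>. r \<omega> - t * u \<omega>) (\<phi> a) = linner M (\<lambda>\<omega>. r \<omega> - t * u \<omega>) u + linner M (\<lambda>\<omega>. r \<omega> - t * u \<omega>) ga"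
        unfolding phia by (rule linner_add_right[OF gr(2) ggf(2) g2])
      also have "\<dots> = (linner M r u - t * linner M u u) + (linner M r ga - t * linner M u ga)"
        using lin gr ggf by simp
      also have "\<dots> = 0" using False rga uga by (simp add: t_def)
      finally show ?thesis .
    qed
    hence "\<forall>l\<in>insert a I. linner M (\<lambda>\<omega>. f \<omega> - (\<Sum>k\<in>insert a I. c k * \<phi> k \<omega>)) (\<phi> l) = 0"
      unfolding sumeq using rI uI lin gI by auto
    thus ?thesis by blast
  qed
qed

end


context mx begin

lemma projF_exists:
  assumes "good h"
  shows "\<exists>g\<in>polyF X d n. \<forall>q\<in>polyF X d n. linner M (\<lambda>\<omega>. h \<omega> - g \<omega>) q = 0"
proof -
  obtain c where c: "\<forall>l\<in>multi_idx d n. linner M (\<lambda>\<omega>. h \<omega> - (\<Sum>k\<in>multi_idx d n. c k * pmono X d k \<omega>)) (pmono X d l) = 0"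
    using proj_exists[of "multi_idx d n" "pmono X d" h] multi_idx_finite good_pmono assms by blast
  define g where "g = (\<lambda>\<omega>. \<Sum>k\<in>multi_idx d n. c k * pmono X d k \<omega>)"
  have g: "g \<in> polyF X d n" unfolding g_def polyF_def by blast
  have gr: "good (\<lambda>\<omega>. h \<omega> - g \<omega>)" using good_diff[OF assms good_polyF[OF g]] .
  have "\<forall>q\<in>polyF X d n. linner M (\<lambda>\<omega>. h \<omega> - g \<omega>) q = 0"
  proof
    fix q assume "q \<in> polyF X d n"
    then obtain c' where q: "q = (\<lambda>\<omega>. \<Sum>k\<in>multi_idx d n. c' k * pmono X d k \<omega>)" by (auto simp: polyF_def)
    show "linner M (\<lambda>\<omega>. h \<omega> - g \<omega>) q = 0" unfolding q
      by (rule linner_span_zero[where \<phi>="pmono X d"]) (use c multi_idx_finite good_pmono gr in \<open>simp_all add: g_def\<close>)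
  qed
  thus ?thesis using g by blast
qed

lemma projG_exists:
  assumes "good h"
  shows "\<exists>g. g \<in> polyG M X d n \<and> (\<forall>q \<in> polyG M X d n. linner M (\<lambda>\<omega>. h \<omega> - g \<omega>) q = 0)"
proof (cases "n = 0")
  case True
  thus ?thesis using projF_exists[OF assms, of 0] by (auto simp: polyG_def)
next
  case False
  obtain g1 where g1: "g1 \<in> polyF X d n" "\<forall>q\<in>polyF X d n. linner M (\<lambda>\<omega>. h \<omega> - g1 \<omega>) q = 0"
    using projF_exists[OF assms] by blast
  obtain g0 where g0: "g0 \<in> polyF X d (n-1)" "\<forall>q\<in>polyF X d (n-1). linner M (\<lambda>\<omega>. h \<omega> - g0 \<omega>) q = 0"
    using projF_exists[OF assms] by blast
  have g0n: "g0 \<in> polyF X d n" using polyF_mono[OF _ g0(1)] by simp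
  have gg: "good g0" "good g1" using g0 g1 good_polyF by auto
  define g where "g = (\<lambda>\<omega>. g1 \<omega> - g0 \<omega>)"
  have gF: "g \<in> polyF X d n" unfolding g_def by (rule polyF_diff[OF g1(1) g0n])
  have gorth: "\<forall>q\<in>polyF X d (n-1). linner M g q = 0"
  proof
    fix q assume q: "q \<in> polyF X d (n-1)"
    have qn: "q \<in> polyF X d n" using polyF_mono[OF _ q] by simp
    have "g = (\<lambda>\<omega>. (h \<omega> - g0 \<omega>) - (h \<omega> - g1 \<omega>))" unfolding g_def by auto
    hence "linner M g q = linner M (\<lambda>\<omega>. h \<omega> - g0 \<omega>) q - linner M (\<lambda>\<omega>. h \<omega> - g1 \<omega>) q"
      using linner_diff_left[OF good_diff[OF assms gg(1)] good_diff[OF assms gg(2)] good_polyF[OF q]] by simp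
    thus "linner M g q = 0" using g0(2) g1(2) q qn by simp
  qed
  have gG: "g \<in> polyG M X d n" using False gF gorth by (simp add: polyG_def)
  have "\<forall>q \<in> polyG M X d n. linner M (\<lambda>\<omega>. h \<omega> - g \<omega>) q = 0"
  proof
    fix q assume q: "q \<in> polyG M X d n"
    hence qF: "q \<in> polyF X d n" and qo: "\<forall>p\<in>polyF X d (n-1). linner M q p = 0" using False by (auto simp: polyG_def)
    have "(\<lambda>\<omega>. h \<omega> - g \<omega>) = (\<lambda>\<omega>. (h \<omega> - g1 \<omega>) + g0 \<omega>)" unfolding g_def by auto
    hence "linner M (\<lambda>\<omega>. h \<omega> - g \<omega>) q = linner M (\<lambda>\<omega>. h \<omega> - g1 \<omega>) q + linner M g0 q"
      using linner_add_left[OF good_diff[OF assms gg(2)] gg(1) good_polyF[OF qF]] by simp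
    also have "linner M g0 q = cnj (linner M q g0)" by (rule linner_sym)
    finally show "linner M (\<lambda>\<omega>. h \<omega> - g \<omega>) q = 0" using g1(2) qF qo g0(1) by simp
  qed
  thus ?thesis using gG by blast
qed

lemma projG_prop:
  assumes "good h"
  shows "projG M X d n h \<in> polyG M X d n"
    "\<forall>q \<in> polyG M X d n. linner M (\<lambda>\<omega>. h \<omega> - projG M X d n h \<omega>) q = 0"
  using someI_ex[OF projG_exists[OF assms, of n]] unfolding projG_def by blast+

lemma polyG_polyF: "g \<in> polyG M X d n \<Longrightarrow> g \<in> polyF X d n"
  by (auto simp: polyG_def split: if_splits)

lemma projG_polyF: "good h \<Longrightarrow> projG M X d n h \<in> polyF X d n"
  using projG_prop(1) polyG_polyF by blast

lemma projG_good: "good h \<Longrightarrow> good (projG M X d n h)"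
  using projG_polyF good_polyF by blast

lemma linner_one: "linner M g (\<lambda>_. 1) = (\<integral>\<omega>. g \<omega> \<partial>M)"
  unfolding linner_def by simp

lemma int_projG:
  assumes "good h"
  shows "(\<integral>\<omega>. projG M X d n h \<omega> \<partial>M) = (if n = 0 then (\<integral>\<omega>. h \<omega> \<partial>M) else 0)"
proof (cases "n = 0")
  case True
  have "(\<lambda>_. 1) \<in> polyG M X d 0" by (simp add: polyG_def polyF_one)
  hence "linner M (\<lambda>\<omega>. h \<omega> - projG M X d 0 h \<omega>) (\<lambda>_. 1) = 0" using projG_prop(2)[OF assms, of 0] by blast
  hence "(\<integral>\<omega>. h \<omega> - projG M X d 0 h \<omega> \<partial>M) = 0" by (simp add: linner_one)
  hence "(\<integral>\<omega>. h \<omega> \<partial>M) - (\<integral>\<omega>. projG M X d 0 h \<omega> \<partial>M) = 0"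
    using good_integrable[OF assms] good_integrable[OF projG_good[OF assms]] by simp
  thus ?thesis using True by simp
next
  case False
  have "(\<lambda>_. 1) \<in> polyF X d (n-1)" using polyF_mono[OF _ polyF_one] by simp
  hence "linner M (projG M X d n h) (\<lambda>_. 1) = 0" using projG_prop(1)[OF assms, of n] False by (auto simp: polyG_def)
  thus ?thesis using False by (simp add: linner_one)
qed

lemma int_X_const: "i < d \<Longrightarrow> (\<integral>\<omega>. complex_of_real (X i \<omega>) * c \<partial>M) = 0"
  using Xmean[of i] by (simp add: integral_complex_of_real)

lemma X_polyG1: assumes "i < d" shows "(\<lambda>\<omega>. complex_of_real (X i \<omega>)) \<in> polyG M X d 1"
proof -
  have "\<forall>g\<in>polyF X d 0. linner M (\<lambda>\<omega>. complex_of_real (X i \<omega>)) g = 0"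
    using int_X_const[OF assms] by (auto simp: polyF_0 linner_def)
  thus ?thesis using polyF_X[OF assms] by (simp add: polyG_def)
qed

lemma int_X_proj1:
  assumes "i < d" "good f"
  shows "(\<integral>\<omega>. complex_of_real (X i \<omega>) * f \<omega> \<partial>M) = (\<integral>\<omega>. complex_of_real (X i \<omega>) * projG M X d 1 f \<omega> \<partial>M)"
proof -
  have "linner M (\<lambda>\<omega>. f \<omega> - projG M X d 1 f \<omega>) (\<lambda>\<omega>. complex_of_real (X i \<omega>)) = 0"
    using projG_prop(2)[OF assms(2), of 1] X_polyG1[OF assms(1)] by blast
  hence "(\<integral>\<omega>. complex_of_real (X i \<omega>) * f \<omega> - complex_of_real (X i \<omega>) * projG M X d 1 f \<omega> \<partial>M) = 0"
    unfolding linner_def by (simp add: algebra_simps)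
  moreover have "integrable M (\<lambda>\<omega>. complex_of_real (X i \<omega>) * f \<omega>)"
    by (intro good_integrable good_mult good_X assms)
  moreover have "integrable M (\<lambda>\<omega>. complex_of_real (X i \<omega>) * projG M X d 1 f \<omega>)"
    by (intro good_integrable good_mult good_X assms projG_good)
  ultimately show ?thesis by simp
qed

lemma pdeg_in: "f \<in> polyAll X d \<Longrightarrow> f \<in> polyF X d (pdeg X d f)"
  unfolding pdeg_def polyAll_def by (auto intro: LeastI)

lemma Uop_good:
  assumes "f \<in> polyAll X d" "i < d"
  shows "good (Uop M X d i f)"
proof -
  have gf: "good f" using assms good_polyAll by auto
  have Y: "\<And>n. good (\<lambda>\<omega>'. complex_of_real (X i \<omega>') * projG M X d n f \<omega>')"
    by (intro good_mult good_X assms projG_good gf)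
  show ?thesis unfolding Uop_def aminus_def azero_def
    by (intro good_add good_div2 good_sum projG_good Y)
qed

lemma int_Uop:
  assumes "f \<in> polyAll X d" "i < d"
  shows "(\<integral>\<omega>. Uop M X d i f \<omega> \<partial>M) = (\<integral>\<omega>. complex_of_real (X i \<omega>) * f \<omega> \<partial>M)"
proof -
  have gf: "good f" using assms good_polyAll by auto
  define Y where "Y = (\<lambda>n \<omega>'. complex_of_real (X i \<omega>') * projG M X d n f \<omega>')"
  have Y: "\<And>n. good (Y n)" unfolding Y_def by (intro good_mult good_X assms projG_good gf)
  have Yeq: "\<And>n. (\<lambda>\<omega>'. complex_of_real (X i \<omega>') * projG M X d n f \<omega>') = Y n" by (simp add: Y_def)
  define p where "p = pdeg X d f"
  have am: "(\<integral>\<omega>. aminus M X d i f \<omega> \<partial>M) = (if 1 \<le> p then (\<integral>\<omega>. Y 1 \<omega> \<partial>M) else 0)"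
  proof -
    have "(\<integral>\<omega>. aminus M X d i f \<omega> \<partial>M) = (\<Sum>n\<in>{1..p}. \<integral>\<omega>. projG M X d (n-1) (Y n) \<omega> \<partial>M)"
      unfolding aminus_def Yeq p_def[symmetric]
      by (intro Bochner_Integration.integral_sum good_integrable projG_good Y)
    also have "\<dots> = (\<Sum>n\<in>{1..p}. if n = 1 then (\<integral>\<omega>. Y 1 \<omega> \<partial>M) else 0)"
      by (intro sum.cong refl) (auto simp: int_projG[OF Y])
    also have "\<dots> = (if 1 \<le> p then (\<integral>\<omega>. Y 1 \<omega> \<partial>M) else 0)" by (simp add: sum.delta)
    finally show ?thesis .
  qed
  have az: "(\<integral>\<omega>. azero M X d i f \<omega> \<partial>M) = 0"
  proof -
    have "(\<integral>\<omega>. azero M X d i f \<omega> \<partial>M) = (\<Sum>n\<in>{..p}. \<integral>\<omega>. projG M X d n (Y n) \<omega> \<partial>M)"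
      unfolding azero_def Yeq p_def[symmetric]
      by (intro Bochner_Integration.integral_sum good_integrable projG_good Y)
    also have "\<dots> = (\<Sum>n\<in>{..p}. if n = 0 then (\<integral>\<omega>. Y 0 \<omega> \<partial>M) else 0)"
      by (intro sum.cong refl) (auto simp: int_projG[OF Y])
    also have "\<dots> = (\<integral>\<omega>. Y 0 \<omega> \<partial>M)" by (simp add: sum.delta)
    also have "\<dots> = 0"
    proof -
      obtain c where "projG M X d 0 f = (\<lambda>_. c)" using projG_polyF[OF gf, of 0] by (auto simp: polyF_0)
      thus ?thesis unfolding Y_def using int_X_const[OF assms(2)] by simp
    qed
    finally show ?thesis .
  qed
  have "(\<integral>\<omega>. Uop M X d i f \<omega> \<partial>M) = (\<integral>\<omega>. aminus M X d i f \<omega> \<partial>M) + (\<integral>\<omega>. azero M X d i f \<omega> \<partial>M) / 2"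
  proof -
    have ga: "good (aminus M X d i f)" unfolding aminus_def by (intro good_sum projG_good good_mult good_X assms gf)
    have gz: "good (azero M X d i f)" unfolding azero_def by (intro good_sum projG_good good_mult good_X assms gf)
    show ?thesis unfolding Uop_def using good_integrable[OF ga] good_integrable[OF good_div2[OF gz]] by simp
  qed
  also have "\<dots> = (if 1 \<le> p then (\<integral>\<omega>. Y 1 \<omega> \<partial>M) else 0)" using am az by simp
  also have "\<dots> = (\<integral>\<omega>. complex_of_real (X i \<omega>) * f \<omega> \<partial>M)"
  proof (cases "1 \<le> p")
    case True thus ?thesis using int_X_proj1[OF assms(2) gf] by (simp add: Y_def)
  next
    case False
    hence "pdeg X d f = 0" by (simp add: p_def)
    hence "f \<in> polyF X d 0" using pdeg_in[OF assms(1)] by simp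
    then obtain c where "f = (\<lambda>_. c)" by (auto simp: polyF_0)
    thus ?thesis using False int_X_const[OF assms(2)] by simp
  qed
  finally show ?thesis .
qed

lemma one_polyAll: "(\<lambda>_. 1) \<in> polyAll X d"
  unfolding polyAll_def using polyF_one by blast

lemma Uop_one:
  assumes "i < d"
  shows "Uop M X d i (\<lambda>_. 1) = (\<lambda>_. 0)"
proof -
  have p: "pdeg X d (\<lambda>_. 1) = 0" unfolding pdeg_def using polyF_one by (intro Least_eq_0)
  have g1: "good (\<lambda>_. 1)" by (rule good_const)
  obtain c where c: "projG M X d 0 (\<lambda>_. 1) = (\<lambda>_. c)" using projG_polyF[OF g1, of 0] by (auto simp: polyF_0)
  have "(\<integral>\<omega>. projG M X d 0 (\<lambda>_. 1) \<omega> \<partial>M) = 1" using int_projG[OF g1, of 0] by (simp add: prob_space)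
  hence c1: "c = 1" using c by (simp add: prob_space)
  have gX: "good (\<lambda>\<omega>. complex_of_real (X i \<omega>))" by (rule good_X[OF assms])
  obtain c' where c': "projG M X d 0 (\<lambda>\<omega>. complex_of_real (X i \<omega>)) = (\<lambda>_. c')" using projG_polyF[OF gX, of 0] by (auto simp: polyF_0)
  have "(\<integral>\<omega>. projG M X d 0 (\<lambda>\<omega>. complex_of_real (X i \<omega>)) \<omega> \<partial>M) = 0"
    using int_projG[OF gX, of 0] int_X_const[OF assms, of 1] by simp
  hence c0: "c' = 0" using c' by (simp add: prob_space)
  show ?thesis unfolding Uop_def aminus_def azero_def p using c c1 c' c0 by simp
qed

end


context mx begin

definition Lf :: "(nat \<Rightarrow> nat \<Rightarrow> nat \<Rightarrow> real) \<Rightarrow> (nat \<Rightarrow> nat \<Rightarrow> real) \<Rightarrow> nat \<Rightarrow> nat \<Rightarrow> 'a \<Rightarrow> complex" where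
  "Lf \<alpha> \<beta> i j = (\<lambda>\<omega>. complex_of_real (\<Sum>k<d. \<alpha> i j k * X k \<omega>) + complex_of_real (\<beta> i j))"

lemma Lf_eq: "Lf \<alpha> \<beta> i j \<omega> = (\<Sum>k<d. complex_of_real (\<alpha> i j k) * complex_of_real (X k \<omega>)) + complex_of_real (\<beta> i j)"
  unfolding Lf_def by simp

lemma good_Lf: "good (Lf \<alpha> \<beta> i j)"
proof -
  have "Lf \<alpha> \<beta> i j = (\<lambda>\<omega>. (\<Sum>k<d. complex_of_real (\<alpha> i j k) * complex_of_real (X k \<omega>)) + complex_of_real (\<beta> i j))"
    using Lf_eq by auto
  thus ?thesis by (auto intro!: good_add good_sum good_cmult good_X good_const)
qed

lemma prodL_polyAll: "set js \<subseteq> {..<d} \<Longrightarrow> prodL X js \<in> polyAll X d"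
  unfolding polyAll_def using prodL_polyF by blast

lemma comm_rec:
  assumes mc: "meixner_comm M X d \<alpha> \<beta>" and i: "i < d"
  shows "set js \<subseteq> {..<d} \<Longrightarrow> good P \<Longrightarrow>
    (\<integral>\<omega>. P \<omega> * Uop M X d i (prodL X js) \<omega> \<partial>M) =
    (\<Sum>m<length js. \<integral>\<omega>. P \<omega> * prodL X (take m js) \<omega> * Lf \<alpha> \<beta> i (js ! m) \<omega> * prodL X (drop (Suc m) js) \<omega> \<partial>M)"
proof (induction js arbitrary: P)
  case Nil thus ?case by (simp add: prodL_Nil Uop_one[OF i])
next
  case (Cons j rest)
  have j: "j < d" and rs: "set rest \<subseteq> {..<d}" using Cons.prems by auto
  define R where "R = prodL X rest"
  have RA: "R \<in> polyAll X d" unfolding R_def by (rule prodL_polyAll[OF rs])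
  have gR: "good R" using good_polyAll[OF RA] .
  have XR: "(\<lambda>\<omega>. complex_of_real (X j \<omega>) * R \<omega>) \<in> polyAll X d"
    using prodL_polyAll[OF Cons.prems(1)] by (simp add: prodL_Cons R_def)
  have AEc: "AE \<omega> in M. Uop M X d i (\<lambda>\<omega>'. complex_of_real (X j \<omega>') * R \<omega>') \<omega>
                 - complex_of_real (X j \<omega>) * Uop M X d i R \<omega>
               = complex_of_real (\<Sum>k<d. \<alpha> i j k * X k \<omega>) * R \<omega>
                 + complex_of_real (\<beta> i j) * R \<omega>"
    using mc i j RA unfolding meixner_comm_def by blast
  define P' where "P' = (\<lambda>\<omega>. P \<omega> * complex_of_real (X j \<omega>))"
  have gP': "good P'" unfolding P'_def by (intro good_mult Cons.prems good_X j)
  have gU: "good (Uop M X d i R)" by (rule Uop_good[OF RA i])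
  have gU2: "good (Uop M X d i (\<lambda>\<omega>'. complex_of_real (X j \<omega>') * R \<omega>'))" by (rule Uop_good[OF XR i])
  have "(\<integral>\<omega>. P \<omega> * Uop M X d i (prodL X (j # rest)) \<omega> \<partial>M) =
        (\<integral>\<omega>. P' \<omega> * Uop M X d i R \<omega> + P \<omega> * Lf \<alpha> \<beta> i j \<omega> * R \<omega> \<partial>M)"
  proof (rule integral_cong_AE)
    show "(\<lambda>\<omega>. P \<omega> * Uop M X d i (prodL X (j # rest)) \<omega>) \<in> borel_measurable M"
      using good_mult[OF Cons.prems(2) gU2] by (simp add: good_def prodL_Cons R_def)
    show "(\<lambda>\<omega>. P' \<omega> * Uop M X d i R \<omega> + P \<omega> * Lf \<alpha> \<beta> i j \<omega> * R \<omega>) \<in> borel_measurable M"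
      using good_add[OF good_mult[OF gP' gU] good_mult[OF good_mult[OF Cons.prems(2) good_Lf] gR]] by (simp add: good_def)
    show "AE \<omega> in M. P \<omega> * Uop M X d i (prodL X (j # rest)) \<omega> = P' \<omega> * Uop M X d i R \<omega> + P \<omega> * Lf \<alpha> \<beta> i j \<omega> * R \<omega>"
      using AEc
    proof eventually_elim
      case (elim \<omega>)
      hence "Uop M X d i (prodL X (j # rest)) \<omega> = complex_of_real (X j \<omega>) * Uop M X d i R \<omega> + Lf \<alpha> \<beta> i j \<omega> * R \<omega>"
        by (simp add: prodL_Cons R_def Lf_def algebra_simps)
      thus ?case by (simp add: P'_def algebra_simps)
    qed
  qed
  also have "\<dots> = (\<integral>\<omega>. P' \<omega> * Uop M X d i R \<omega> \<partial>M) + (\<integral>\<omega>. P \<omega> * Lf \<alpha> \<beta> i j \<omega> * R \<omega> \<partial>M)"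
    by (rule Bochner_Integration.integral_add[OF good_integrable[OF good_mult[OF gP' gU]] good_integrable[OF good_mult[OF good_mult[OF Cons.prems(2) good_Lf] gR]]])
  finally have fin0: "(\<integral>\<omega>. P \<omega> * Uop M X d i (prodL X (j # rest)) \<omega> \<partial>M) =
     (\<integral>\<omega>. P' \<omega> * Uop M X d i R \<omega> \<partial>M) + (\<integral>\<omega>. P \<omega> * Lf \<alpha> \<beta> i j \<omega> * R \<omega> \<partial>M)" .
  have ih: "(\<integral>\<omega>. P' \<omega> * Uop M X d i R \<omega> \<partial>M) =
    (\<Sum>m<length rest. \<integral>\<omega>. P' \<omega> * prodL X (take m rest) \<omega> * Lf \<alpha> \<beta> i (rest ! m) \<omega> * prodL X (drop (Suc m) rest) \<omega> \<partial>M)"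
    unfolding R_def by (rule Cons.IH[OF rs gP'])
  have fin: "(\<integral>\<omega>. P \<omega> * Uop M X d i (prodL X (j # rest)) \<omega> \<partial>M) =
    (\<integral>\<omega>. P \<omega> * Lf \<alpha> \<beta> i j \<omega> * R \<omega> \<partial>M) +
    (\<Sum>m<length rest. \<integral>\<omega>. P' \<omega> * prodL X (take m rest) \<omega> * Lf \<alpha> \<beta> i (rest ! m) \<omega> * prodL X (drop (Suc m) rest) \<omega> \<partial>M)"
    unfolding fin0 ih by (rule add.commute)
  show ?case unfolding length_Cons sum.lessThan_Suc_shift fin
  proof (rule arg_cong2[where f="(+)"])
    show "(\<integral>\<omega>. P \<omega> * Lf \<alpha> \<beta> i j \<omega> * R \<omega> \<partial>M) =
      (\<integral>\<omega>. P \<omega> * prodL X (take 0 (j # rest)) \<omega> * Lf \<alpha> \<beta> i ((j # rest) ! 0) \<omega> * prodL X (drop (Suc 0) (j # rest)) \<omega> \<partial>M)"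
      by (simp add: prodL_Nil R_def)
    show "(\<Sum>m<length rest. \<integral>\<omega>. P' \<omega> * prodL X (take m rest) \<omega> * Lf \<alpha> \<beta> i (rest ! m) \<omega> * prodL X (drop (Suc m) rest) \<omega> \<partial>M) =
      (\<Sum>m<length rest. \<integral>\<omega>. P \<omega> * prodL X (take (Suc m) (j # rest)) \<omega> * Lf \<alpha> \<beta> i ((j # rest) ! Suc m) \<omega> * prodL X (drop (Suc (Suc m)) (j # rest)) \<omega> \<partial>M)"
    proof (rule sum.cong[OF refl])
      fix m
      have pt: "\<And>\<omega>. P' \<omega> * prodL X (take m rest) \<omega> * Lf \<alpha> \<beta> i (rest ! m) \<omega> * prodL X (drop (Suc m) rest) \<omega> =
         P \<omega> * prodL X (take (Suc m) (j # rest)) \<omega> * Lf \<alpha> \<beta> i ((j # rest) ! Suc m) \<omega> * prodL X (drop (Suc (Suc m)) (j # rest)) \<omega>"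
        unfolding P'_def take_Suc_Cons nth_Cons_Suc drop_Suc_Cons prodL_Cons by (simp only: mult.assoc)
      have "(\<lambda>\<omega>. P' \<omega> * prodL X (take m rest) \<omega> * Lf \<alpha> \<beta> i (rest ! m) \<omega> * prodL X (drop (Suc m) rest) \<omega>) =
         (\<lambda>\<omega>. P \<omega> * prodL X (take (Suc m) (j # rest)) \<omega> * Lf \<alpha> \<beta> i ((j # rest) ! Suc m) \<omega> * prodL X (drop (Suc (Suc m)) (j # rest)) \<omega>)"
        by (intro ext pt)
      thus "(\<integral>\<omega>. P' \<omega> * prodL X (take m rest) \<omega> * Lf \<alpha> \<beta> i (rest ! m) \<omega> * prodL X (drop (Suc m) rest) \<omega> \<partial>M) =
         (\<integral>\<omega>. P \<omega> * prodL X (take (Suc m) (j # rest)) \<omega> * Lf \<alpha> \<beta> i ((j # rest) ! Suc m) \<omega> * prodL X (drop (Suc (Suc m)) (j # rest)) \<omega> \<partial>M)"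
        by (rule arg_cong)
    qed
  qed
qed

definition mom :: "nat list \<Rightarrow> complex" where "mom js = (\<integral>\<omega>. prodL X js \<omega> \<partial>M)"

lemma term_expand:
  assumes "set xs \<subseteq> {..<d}" "set ys \<subseteq> {..<d}"
  shows "(\<integral>\<omega>. 1 * prodL X xs \<omega> * Lf \<alpha> \<beta> i j \<omega> * prodL X ys \<omega> \<partial>M) =
    (\<Sum>k<d. complex_of_real (\<alpha> i j k) * mom (xs @ k # ys)) + complex_of_real (\<beta> i j) * mom (xs @ ys)"
proof -
  have eq: "(\<lambda>\<omega>. 1 * prodL X xs \<omega> * Lf \<alpha> \<beta> i j \<omega> * prodL X ys \<omega>) =
    (\<lambda>\<omega>. (\<Sum>k<d. complex_of_real (\<alpha> i j k) * prodL X (xs @ k # ys) \<omega>) + complex_of_real (\<beta> i j) * prodL X (xs @ ys) \<omega>)"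
    by (simp add: Lf_eq prodL_append prodL_Cons sum_distrib_left sum_distrib_right algebra_simps)
  have g1: "\<And>k. k < d \<Longrightarrow> good (prodL X (xs @ k # ys))" using assms by (intro good_prodL) auto
  have g2: "good (prodL X (xs @ ys))" using assms by (intro good_prodL) auto
  have i1: "integrable M (\<lambda>\<omega>. \<Sum>k<d. complex_of_real (\<alpha> i j k) * prodL X (xs @ k # ys) \<omega>)"
    using g1 by (intro good_integrable good_sum good_cmult) auto
  have i2: "integrable M (\<lambda>\<omega>. complex_of_real (\<beta> i j) * prodL X (xs @ ys) \<omega>)"
    using g2 by (intro good_integrable good_cmult)
  have s: "(\<integral>\<omega>. (\<Sum>k<d. complex_of_real (\<alpha> i j k) * prodL X (xs @ k # ys) \<omega>) \<partial>M) =
     (\<Sum>k<d. \<integral>\<omega>. complex_of_real (\<alpha> i j k) * prodL X (xs @ k # ys) \<omega> \<partial>M)"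
    using g1 by (intro Bochner_Integration.integral_sum good_integrable good_cmult) auto
  show ?thesis unfolding eq mom_def Bochner_Integration.integral_add[OF i1 i2] s by simp
qed

lemma mom_rec:
  assumes mc: "meixner_comm M X d \<alpha> \<beta>" and i: "i < d" and rs: "set rest \<subseteq> {..<d}"
  shows "mom (i # rest) = (\<Sum>m<length rest.
     (\<Sum>k<d. complex_of_real (\<alpha> i (rest!m) k) * mom (take m rest @ k # drop (Suc m) rest))
       + complex_of_real (\<beta> i (rest!m)) * mom (take m rest @ drop (Suc m) rest))"
proof -
  have "mom (i # rest) = (\<integral>\<omega>. 1 * Uop M X d i (prodL X rest) \<omega> \<partial>M)"
  proof -
    have "mom (i # rest) = (\<integral>\<omega>. complex_of_real (X i \<omega>) * prodL X rest \<omega> \<partial>M)"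
      unfolding mom_def prodL_Cons ..
    also have "\<dots> = (\<integral>\<omega>. Uop M X d i (prodL X rest) \<omega> \<partial>M)"
      by (rule int_Uop[OF prodL_polyAll[OF rs] i, symmetric])
    finally show ?thesis by (simp only: mult_1)
  qed
  also have "\<dots> = (\<Sum>m<length rest. \<integral>\<omega>. 1 * prodL X (take m rest) \<omega> * Lf \<alpha> \<beta> i (rest ! m) \<omega> * prodL X (drop (Suc m) rest) \<omega> \<partial>M)"
    by (rule comm_rec[OF mc i rs good_const])
  also have "\<dots> = (\<Sum>m<length rest.
     (\<Sum>k<d. complex_of_real (\<alpha> i (rest!m) k) * mom (take m rest @ k # drop (Suc m) rest))
       + complex_of_real (\<beta> i (rest!m)) * mom (take m rest @ drop (Suc m) rest))"
  proof (rule sum.cong[OF refl])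
    fix m
    have "set (take m rest) \<subseteq> {..<d}" "set (drop (Suc m) rest) \<subseteq> {..<d}"
      by (rule order_trans[OF set_take_subset rs], rule order_trans[OF set_drop_subset rs])
    thus "(\<integral>\<omega>. 1 * prodL X (take m rest) \<omega> * Lf \<alpha> \<beta> i (rest ! m) \<omega> * prodL X (drop (Suc m) rest) \<omega> \<partial>M) =
      (\<Sum>k<d. complex_of_real (\<alpha> i (rest!m) k) * mom (take m rest @ k # drop (Suc m) rest))
       + complex_of_real (\<beta> i (rest!m)) * mom (take m rest @ drop (Suc m) rest)"
      by (rule term_expand)
  qed
  finally show ?thesis .
qed

end


context mx begin

lemma mom_Nil: "mom [] = 1"
  unfolding mom_def prodL_Nil by (simp add: prob_space)

lemma mom_bound:
  assumes mc: "meixner_comm M X d \<alpha> \<beta>" and A0: "0 \<le> A" and B0: "0 \<le> B"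
    and \<alpha>b: "\<And>i j k. i < d \<Longrightarrow> j < d \<Longrightarrow> k < d \<Longrightarrow> \<bar>\<alpha> i j k\<bar> \<le> A"
    and \<beta>b: "\<And>i j. i < d \<Longrightarrow> j < d \<Longrightarrow> \<bar>\<beta> i j\<bar> \<le> B"
    and K: "K = max (real d * A + B) 1"
  shows "set js \<subseteq> {..<d} \<Longrightarrow> cmod (mom js) \<le> K ^ length js * fact (length js)"
proof (induction "length js" arbitrary: js rule: less_induct)
  case less
  have K1: "1 \<le> K" using K by simp
  have KdAB: "real d * A + B \<le> K" using K by simp
  show ?case
  proof (cases js)
    case Nil thus ?thesis by (simp add: mom_Nil)
  next
    case (Cons i rest)
    have i: "i < d" and rs: "set rest \<subseteq> {..<d}" using less.prems Cons by auto
    define n where "n = length rest"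
    define T where "T = K ^ n * fact n"
    have T0: "0 \<le> T" unfolding T_def using K1 by simp
    have summand: "cmod ((\<Sum>k<d. complex_of_real (\<alpha> i (rest!m) k) * mom (take m rest @ k # drop (Suc m) rest))
       + complex_of_real (\<beta> i (rest!m)) * mom (take m rest @ drop (Suc m) rest)) \<le> K * T" if m: "m < n" for m
    proof -
      have rm: "rest ! m < d" using rs m n_def nth_mem by fastforce
      have st: "set (take m rest) \<subseteq> {..<d}" "set (drop (Suc m) rest) \<subseteq> {..<d}"
        by (rule order_trans[OF set_take_subset rs], rule order_trans[OF set_drop_subset rs])
      have a: "cmod (mom (take m rest @ k # drop (Suc m) rest)) \<le> T" if k: "k < d" for k
      proof -
        have len: "length (take m rest @ k # drop (Suc m) rest) = n" using m n_def by simp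
        have "set (take m rest @ k # drop (Suc m) rest) \<subseteq> {..<d}" using st k by auto
        moreover have "length (take m rest @ k # drop (Suc m) rest) < length js" using len Cons n_def by simp
        ultimately have "cmod (mom (take m rest @ k # drop (Suc m) rest)) \<le> K ^ length (take m rest @ k # drop (Suc m) rest) * fact (length (take m rest @ k # drop (Suc m) rest))"
          using less.hyps by blast
        hence "cmod (mom (take m rest @ k # drop (Suc m) rest)) \<le> K ^ n * fact n" by (simp only: len)
        thus ?thesis by (simp add: T_def)
      qed
      have b: "cmod (mom (take m rest @ drop (Suc m) rest)) \<le> T"
      proof -
        have len: "length (take m rest @ drop (Suc m) rest) = n - 1" using m n_def by simp
        have "set (take m rest @ drop (Suc m) rest) \<subseteq> {..<d}" using st by auto
        moreover have "length (take m rest @ drop (Suc m) rest) < length js" using len Cons n_def by simp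
        ultimately have "cmod (mom (take m rest @ drop (Suc m) rest)) \<le> K ^ length (take m rest @ drop (Suc m) rest) * fact (length (take m rest @ drop (Suc m) rest))"
          using less.hyps by blast
        hence "cmod (mom (take m rest @ drop (Suc m) rest)) \<le> K ^ (n-1) * fact (n-1)" by (simp only: len)
        also have "\<dots> \<le> K ^ n * fact n"
          using K1 by (intro mult_mono power_increasing) (auto intro: fact_mono)
        finally show ?thesis by (simp add: T_def)
      qed
      have "cmod ((\<Sum>k<d. complex_of_real (\<alpha> i (rest!m) k) * mom (take m rest @ k # drop (Suc m) rest))
         + complex_of_real (\<beta> i (rest!m)) * mom (take m rest @ drop (Suc m) rest))
         \<le> (\<Sum>k<d. cmod (complex_of_real (\<alpha> i (rest!m) k) * mom (take m rest @ k # drop (Suc m) rest)))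
           + cmod (complex_of_real (\<beta> i (rest!m)) * mom (take m rest @ drop (Suc m) rest))"
        by (rule order_trans[OF norm_triangle_ineq add_right_mono[OF norm_sum]])
      also have "\<dots> \<le> (\<Sum>k<d. A * T) + B * T"
      proof (rule add_mono)
        show "(\<Sum>k<d. cmod (complex_of_real (\<alpha> i (rest!m) k) * mom (take m rest @ k # drop (Suc m) rest))) \<le> (\<Sum>k<d. A * T)"
        proof (rule sum_mono)
          fix k assume "k \<in> {..<d}"
          hence k: "k < d" by simp
          show "cmod (complex_of_real (\<alpha> i (rest!m) k) * mom (take m rest @ k # drop (Suc m) rest)) \<le> A * T"
            unfolding norm_mult norm_of_real using \<alpha>b[OF i rm k] a[OF k] A0 by (intro mult_mono) auto
        qed
        show "cmod (complex_of_real (\<beta> i (rest!m)) * mom (take m rest @ drop (Suc m) rest)) \<le> B * T"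
          unfolding norm_mult norm_of_real using \<beta>b[OF i rm] b B0 by (intro mult_mono) auto
      qed
      also have "\<dots> = (real d * A + B) * T" by (simp add: algebra_simps)
      also have "\<dots> \<le> K * T" using KdAB T0 by (rule mult_right_mono)
      finally show ?thesis .
    qed
    have "cmod (mom js) = cmod (\<Sum>m<n. (\<Sum>k<d. complex_of_real (\<alpha> i (rest!m) k) * mom (take m rest @ k # drop (Suc m) rest))
       + complex_of_real (\<beta> i (rest!m)) * mom (take m rest @ drop (Suc m) rest))"
      unfolding Cons n_def by (subst mom_rec[OF mc i rs]) (rule refl)
    also have "\<dots> \<le> (\<Sum>m<n. K * T)"
      by (rule order_trans[OF norm_sum sum_mono]) (use summand in auto)
    also have "\<dots> = real n * K * T" by simp
    also have "\<dots> \<le> K ^ length js * fact (length js)"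
    proof -
      have "real n * K * T \<le> real (Suc n) * K * T" using K1 T0 by (intro mult_right_mono) auto
      also have "\<dots> = K ^ Suc n * fact (Suc n)" unfolding T_def by (simp add: algebra_simps)
      finally show ?thesis using Cons n_def by simp
    qed
    finally show ?thesis .
  qed
qed

end


definition cj :: "(nat \<Rightarrow> nat) \<Rightarrow> nat \<Rightarrow> nat list" where
  "cj ii e = concat (map (\<lambda>k. replicate (ii k) k) [0..<e])"

lemma cj_props:
  "length (cj ii e) = (\<Sum>k<e. ii k)"
  "set (cj ii e) \<subseteq> {..<e}"
  "prodL X (cj ii e) \<omega> = (\<Prod>k<e. complex_of_real (X k \<omega>) ^ ii k)"
proof -
  have "length (cj ii e) = (\<Sum>k<e. ii k) \<and> set (cj ii e) \<subseteq> {..<e} \<and> prodL X (cj ii e) \<omega> = (\<Prod>k<e. complex_of_real (X k \<omega>) ^ ii k)"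
  proof (induction e)
    case 0 thus ?case by (simp add: cj_def prodL_def)
  next
    case (Suc e)
    have eq: "cj ii (Suc e) = cj ii e @ replicate (ii e) e" by (simp add: cj_def)
    have pr: "prodL X (replicate n e) \<omega> = complex_of_real (X e \<omega>) ^ n" for n
      by (simp add: prodL_def prod_list_replicate)
    show ?case using Suc unfolding eq by (auto simp: prodL_append pr)
  qed
  thus "length (cj ii e) = (\<Sum>k<e. ii k)" "set (cj ii e) \<subseteq> {..<e}"
    "prodL X (cj ii e) \<omega> = (\<Prod>k<e. complex_of_real (X k \<omega>) ^ ii k)" by auto
qed

context mx begin

lemma Y_meas: "(\<lambda>\<omega>. \<Prod>k<d. X k \<omega> ^ ii k) \<in> borel_measurable M"
  by (intro borel_measurable_prod borel_measurable_power Xmeas) auto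

lemma Y_complex: "prodL X (cj ii d) = (\<lambda>\<omega>. complex_of_real (\<Prod>k<d. X k \<omega> ^ ii k))"
  by (rule ext) (simp add: cj_props(3))

lemma Y_int: "integrable M (\<lambda>\<omega>. \<Prod>k<d. X k \<omega> ^ ii k) \<and> integrable M (\<lambda>\<omega>. \<bar>\<Prod>k<d. X k \<omega> ^ ii k\<bar>)"
proof -
  have "good (prodL X (cj ii d))" using cj_props(2) by (rule good_prodL)
  then obtain C N where b: "\<forall>\<omega>\<in>space M. cmod (prodL X (cj ii d) \<omega>) \<le> C * W \<omega> ^ N" unfolding good_def by blast
  hence b': "\<forall>\<omega>\<in>space M. norm (\<Prod>k<d. X k \<omega> ^ ii k) \<le> C * W \<omega> ^ N" unfolding Y_complex norm_of_real real_norm_def .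
  have m2: "(\<lambda>\<omega>. \<bar>\<Prod>k<d. X k \<omega> ^ ii k\<bar>) \<in> borel_measurable M" using Y_meas by (rule borel_measurable_abs)
  show ?thesis using bounded_integrable[OF Y_meas b'] bounded_integrable[OF m2] b' by auto
qed

lemma abs_mom_bound:
  assumes mc: "meixner_comm M X d \<alpha> \<beta>" and A0: "0 \<le> A" and B0: "0 \<le> B"
    and \<alpha>b: "\<And>i j k. i < d \<Longrightarrow> j < d \<Longrightarrow> k < d \<Longrightarrow> \<bar>\<alpha> i j k\<bar> \<le> A"
    and \<beta>b: "\<And>i j. i < d \<Longrightarrow> j < d \<Longrightarrow> \<bar>\<beta> i j\<bar> \<le> B"
    and K: "K = max (real d * A + B) 1"
  shows "\<bar>\<integral>\<omega>. (\<Prod>k<d. X k \<omega> ^ ii k) \<partial>M\<bar> \<le> K ^ (\<Sum>k<d. ii k) * fact (\<Sum>k<d. ii k)"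
proof -
  have "mom (cj ii d) = complex_of_real (\<integral>\<omega>. (\<Prod>k<d. X k \<omega> ^ ii k) \<partial>M)"
    unfolding mom_def Y_complex by (rule Bochner_Integration.integral_complex_of_real)
  moreover have "cmod (mom (cj ii d)) \<le> K ^ length (cj ii d) * fact (length (cj ii d))"
    by (rule mom_bound[OF mc A0 B0 \<alpha>b \<beta>b K cj_props(2)])
  ultimately show ?thesis by (simp add: cj_props(1))
qed

lemma fact_double: "(fact (2 * n) :: real) \<le> 4 ^ n * (fact n * fact n)"
proof -
  have "fact n * fact (2*n - n) * (2*n choose n) = (fact (2*n) :: nat)" by (rule binomial_fact_lemma) simp
  hence e: "fact (2*n) = fact n * fact n * (2*n choose n)" by simp
  have "(2*n choose n) \<le> 2 ^ (2*n)" by (rule binomial_le_pow2)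
  also have "(2::nat) ^ (2*n) = 4 ^ n" by (simp add: power_mult)
  finally have "fact (2*n) \<le> fact n * fact n * (4::nat) ^ n" unfolding e by simp
  hence "real (fact (2*n)) \<le> real (fact n * fact n * 4 ^ n)" by (rule of_nat_mono)
  thus ?thesis by (simp add: algebra_simps)
qed

lemma abs_int_bound:
  assumes mc: "meixner_comm M X d \<alpha> \<beta>" and A0: "0 \<le> A" and B0: "0 \<le> B"
    and \<alpha>b: "\<And>i j k. i < d \<Longrightarrow> j < d \<Longrightarrow> k < d \<Longrightarrow> \<bar>\<alpha> i j k\<bar> \<le> A"
    and \<beta>b: "\<And>i j. i < d \<Longrightarrow> j < d \<Longrightarrow> \<bar>\<beta> i j\<bar> \<le> B"
    and K: "K = max (real d * A + B) 1"
  shows "(\<integral>\<omega>. \<bar>\<Prod>k<d. X k \<omega> ^ ii k\<bar> \<partial>M) \<le> (2 * K) ^ (\<Sum>k<d. ii k) * fact (\<Sum>k<d. ii k)"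
proof -
  define Y where "Y = (\<lambda>\<omega>. \<Prod>k<d. X k \<omega> ^ ii k)"
  define n where "n = (\<Sum>k<d. ii k)"
  define c where "c = (\<integral>\<omega>. \<bar>Y \<omega>\<bar> \<partial>M)"
  define ii2 where "ii2 = (\<lambda>k. 2 * ii k)"
  have Y2: "(\<lambda>\<omega>. \<Prod>k<d. X k \<omega> ^ ii2 k) = (\<lambda>\<omega>. (Y \<omega>)^2)"
    unfolding Y_def ii2_def by (rule ext) (simp add: power_mult prod_power_distrib[symmetric] mult.commute)
  have n2: "(\<Sum>k<d. ii2 k) = 2 * n" unfolding ii2_def n_def by (simp add: sum_distrib_left)
  have iY: "integrable M (\<lambda>\<omega>. \<bar>Y \<omega>\<bar>)" using Y_int unfolding Y_def by blast
  have iY2: "integrable M (\<lambda>\<omega>. (Y \<omega>)^2)" using Y_int[of ii2] unfolding Y2 by blast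
  have K1: "1 \<le> K" using K by simp
  have "0 \<le> (\<integral>\<omega>. (\<bar>Y \<omega>\<bar> - c)^2 \<partial>M)" by (rule Bochner_Integration.integral_nonneg) auto
  also have "(\<integral>\<omega>. (\<bar>Y \<omega>\<bar> - c)^2 \<partial>M) = (\<integral>\<omega>. (Y \<omega>)^2 - 2 * c * \<bar>Y \<omega>\<bar> + c^2 \<partial>M)"
    by (rule Bochner_Integration.integral_cong) (auto simp: power2_eq_square algebra_simps)
  also have "\<dots> = (\<integral>\<omega>. (Y \<omega>)^2 \<partial>M) - 2 * c * c + c^2"
    using iY iY2 by (simp add: prob_space c_def)
  finally have "c^2 \<le> (\<integral>\<omega>. (Y \<omega>)^2 \<partial>M)" by (simp add: power2_eq_square)
  also have "\<dots> \<le> \<bar>\<integral>\<omega>. (Y \<omega>)^2 \<partial>M\<bar>" by simp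
  also have "\<dots> \<le> K ^ (2 * n) * fact (2 * n)"
    using abs_mom_bound[OF mc A0 B0 \<alpha>b \<beta>b K, of ii2] unfolding Y2 n2 .
  also have "\<dots> \<le> K ^ (2 * n) * (4 ^ n * (fact n * fact n))"
    using K1 fact_double[of n] by (intro mult_left_mono) auto
  also have "\<dots> = ((2 * K) ^ n * fact n)^2"
  proof -
    have f: "(4::real) ^ n = 2 ^ n * 2 ^ n" by (simp flip: power_mult_distrib)
    have g: "K ^ (2 * n) = K ^ n * K ^ n" by (simp add: mult_2 power_add)
    show ?thesis unfolding f g by (simp add: power_mult_distrib power2_eq_square algebra_simps)
  qed
  finally have "c^2 \<le> ((2 * K) ^ n * fact n)^2" .
  moreover have "0 \<le> (2 * K) ^ n * fact n" using K1 by simp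
  ultimately have "c \<le> (2 * K) ^ n * fact n" by (rule power2_le_imp_le)
  thus ?thesis unfolding c_def Y_def n_def .
qed

end


theorem mainTheorem4:
  fixes M :: "'a measure" and X :: "nat \<Rightarrow> 'a \<Rightarrow> real" and d :: nat
    and \<alpha> :: "nat \<Rightarrow> nat \<Rightarrow> nat \<Rightarrow> real" and \<beta> :: "nat \<Rightarrow> nat \<Rightarrow> real"
    and ii :: "nat \<Rightarrow> nat"
  assumes "prob_space M"
    and "\<And>k. k < d \<Longrightarrow> X k \<in> borel_measurable M"
    and "\<And>k n. k < d \<Longrightarrow> integrable M (\<lambda>\<omega>. \<bar>X k \<omega>\<bar> ^ n)"
    and "one_meixner M X d"
    and "\<And>k. k < d \<Longrightarrow> (\<integral>\<omega>. X k \<omega> \<partial>M) = 0"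
    and "meixner_comm M X d \<alpha> \<beta>"
  defines "A \<equiv> Max {\<bar>\<alpha> i j k\<bar> | i j k. i < d \<and> j < d \<and> k < d}"
    and "B \<equiv> Max {\<bar>\<beta> i j\<bar> | i j. i < d \<and> j < d}"
  defines "K \<equiv> max (real d * A + B) 1"
  shows "\<bar>\<integral>\<omega>. (\<Prod>k<d. X k \<omega> ^ ii k) \<partial>M\<bar> \<le> K ^ (\<Sum>k<d. ii k) * fact (\<Sum>k<d. ii k)
    \<and> (\<integral>\<omega>. \<bar>\<Prod>k<d. X k \<omega> ^ ii k\<bar> \<partial>M) \<le> (2 * K) ^ (\<Sum>k<d. ii k) * fact (\<Sum>k<d. ii k)"
proof -
  have mxI: "mx M X d" unfolding mx_def mx_axioms_def using assms(1,2,3,5) by blast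
  interpret mx M X d by (rule mxI)
  show ?thesis
  proof (cases "d = 0")
    case True
    thus ?thesis by (simp add: prob_space K_def)
  next
    case False
    hence d0: "0 < d" by simp
    define SA where "SA = {\<bar>\<alpha> i j k\<bar> | i j k. i < d \<and> j < d \<and> k < d}"
    define SB where "SB = {\<bar>\<beta> i j\<bar> | i j. i < d \<and> j < d}"
    have fA: "finite SA"
    proof -
      have "SA \<subseteq> (\<lambda>(i, j, k). \<bar>\<alpha> i j k\<bar>) ` ({..<d} \<times> {..<d} \<times> {..<d})" unfolding SA_def by force
      thus ?thesis by (rule finite_subset) auto
    qed
    have fB: "finite SB"
    proof -
      have "SB \<subseteq> (\<lambda>(i, j). \<bar>\<beta> i j\<bar>) ` ({..<d} \<times> {..<d})" unfolding SB_def by force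
      thus ?thesis by (rule finite_subset) auto
    qed
    have \<alpha>b: "\<bar>\<alpha> i j k\<bar> \<le> A" if "i < d" "j < d" "k < d" for i j k
    proof -
      have "\<bar>\<alpha> i j k\<bar> \<in> SA" unfolding SA_def using that by blast
      thus ?thesis unfolding A_def SA_def[symmetric] using fA by (rule Max_ge[rotated])
    qed
    have \<beta>b: "\<bar>\<beta> i j\<bar> \<le> B" if "i < d" "j < d" for i j
    proof -
      have "\<bar>\<beta> i j\<bar> \<in> SB" unfolding SB_def using that by blast
      thus ?thesis unfolding B_def SB_def[symmetric] using fB by (rule Max_ge[rotated])
    qed
    have A0: "0 \<le> A" using \<alpha>b[OF d0 d0 d0] by linarith
    have B0: "0 \<le> B" using \<beta>b[OF d0 d0] by linarith
    have K: "K = max (real d * A + B) 1" unfolding K_def ..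
    show ?thesis
      using abs_mom_bound[OF assms(6) A0 B0 \<alpha>b \<beta>b K, of ii] abs_int_bound[OF assms(6) A0 B0 \<alpha>b \<beta>b K, of ii]
      by blast
  qed
qed

end
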